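(* Let $k\ge 1$, $\alpha=(\alpha_1,\dots,\alpha_k)\in\mathbb{N}^k$ and $\sigma\in S_k$ a permutation of $\{1,\dots,k\}$. Then for every finite simple undirected graph, $$w_{\alpha_1+\alpha_{\sigma(1)}}\cdots w_{\alpha_k+\alpha_{\sigma(k)}}\le w_{2\alpha_1}\cdots w_{2\alpha_k}.$$
   Context: $\mathbb{N}$ denotes the nonnegative integers. For $j\in\mathbb{N}$, $w_j$ denotes the total number of walks of length $j$ in the graph (a walk is a sequence of vertices in which consecutive vertices are adjacent; vertices and edges may repeat; the length is the number of edges). *)

theory Defs
  imports Main "HOL-Combinatorics.Permutations"
begin

definition simple_graph :: "'a set \<Rightarrow> ('a \<Rightarrow> 'a \<Rightarrow> bool) \<Rightarrow> bool" where
  "simple_graph V E \<longleftrightarrow> finite V \<and> (\<forall>u v. E u v \<longrightarrow> u \<in> V \<and> v \<in> V)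
     \<and> (\<forall>u v. E u v \<longrightarrow> E v u) \<and> (\<forall>v. \<not> E v v)"

definition walks :: "'a set \<Rightarrow> ('a \<Rightarrow> 'a \<Rightarrow> bool) \<Rightarrow> nat \<Rightarrow> 'a list set" where
  "walks V E j = {xs. length xs = Suc j \<and> set xs \<subseteq> V \<and> (\<forall>i < j. E (xs ! i) (xs ! Suc i))}"

definition num_walks :: "'a set \<Rightarrow> ('a \<Rightarrow> 'a \<Rightarrow> bool) \<Rightarrow> nat \<Rightarrow> nat" where
  "num_walks V E j = card (walks V E j)"

end

theory Submission
  imports Defs Complex_Main
begin

lemma cs_real:
  fixes f g :: "'b \<Rightarrow> real"
  assumes "finite S"
  shows "(\<Sum>x\<in>S. f x * g x)^2 \<le> (\<Sum>x\<in>S. (f x)^2) * (\<Sum>x\<in>S. (g x)^2)"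
proof -
  have "0 \<le> (\<Sum>x\<in>S. \<Sum>y\<in>S. (f x * g y - f y * g x)^2)"
    by (intro sum_nonneg) auto
  also have "\<dots> = (\<Sum>x\<in>S. \<Sum>y\<in>S. (f x)^2 * (g y)^2 + (f y)^2 * (g x)^2 - 2 * ((f x * g x) * (f y * g y)))"
    by (intro sum.cong refl) (simp add: power2_eq_square algebra_simps)
  also have "\<dots> = (\<Sum>x\<in>S. \<Sum>y\<in>S. (f x)^2 * (g y)^2) + (\<Sum>x\<in>S. \<Sum>y\<in>S. (f y)^2 * (g x)^2) - 2 * (\<Sum>x\<in>S. \<Sum>y\<in>S. (f x * g x) * (f y * g y))"
    by (simp add: sum.distrib sum_subtractf sum_distrib_left)
  also have "\<dots> = 2 * ((\<Sum>x\<in>S. (f x)^2) * (\<Sum>x\<in>S. (g x)^2)) - 2 * (\<Sum>x\<in>S. f x * g x)^2"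
    by (simp add: sum_distrib_left sum_distrib_right power2_eq_square sum.swap[of "\<lambda>x y. f y * f y * (g x * g x)"] mult.commute)
  finally show ?thesis by simp
qed

lemma cs_nat:
  fixes f g :: "'b \<Rightarrow> nat"
  assumes "finite S"
  shows "(\<Sum>x\<in>S. f x * g x)^2 \<le> (\<Sum>x\<in>S. (f x)^2) * (\<Sum>x\<in>S. (g x)^2)"
proof -
  have "real ((\<Sum>x\<in>S. f x * g x)^2) \<le> real ((\<Sum>x\<in>S. (f x)^2) * (\<Sum>x\<in>S. (g x)^2))"
    using cs_real[OF assms, of "\<lambda>x. real (f x)" "\<lambda>x. real (g x)"] by simp
  then show ?thesis by linarith
qed


lemma finite_walks:
  assumes "finite V" shows "finite (walks V E j)"
proof -
  have "walks V E j \<subseteq> {xs. set xs \<subseteq> V \<and> length xs = Suc j}"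
    unfolding walks_def by auto
  moreover have "finite {xs. set xs \<subseteq> V \<and> length xs = Suc j}"
    using finite_lists_length_eq[OF assms] by simp
  ultimately show ?thesis by (rule finite_subset)
qed

definition Bw :: "'a set \<Rightarrow> ('a \<Rightarrow> 'a \<Rightarrow> bool) \<Rightarrow> nat \<Rightarrow> 'a \<Rightarrow> nat" where
  "Bw V E a w = card {q \<in> walks V E a. hd q = w}"

lemma nth_app_tl_hi:
  assumes "length p = Suc a" "p \<noteq> []" "last p = hd q" "q \<noteq> []" "a \<le> i"
  shows "(p @ tl q) ! i = q ! (i - a)"
proof (cases "i = a")
  case True
  then have "(p @ tl q) ! i = p ! a" using assms by (simp add: nth_append)
  also have "\<dots> = last p" using assms by (simp add: last_conv_nth)
  finally show ?thesis using True assms by (simp add: hd_conv_nth)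
next
  case False
  then have "(p @ tl q) ! i = tl q ! (i - Suc a)" using assms by (simp add: nth_append)
  also have "\<dots> = q ! (i - a)" proof -
    obtain x xs where q: "q = x # xs" using assms by (cases q) auto
    have "i - a = Suc (i - Suc a)" using assms False by simp
    then show ?thesis using q by simp
  qed
  finally show ?thesis .
qed

lemma nth_app_tl_lo:
  assumes "length p = Suc a" "i \<le> a"
  shows "(p @ tl q) ! i = p ! i"
  using assms by (simp add: nth_append)

lemma rev_card:
  assumes g: "simple_graph V E"
  shows "card {p \<in> walks V E a. last p = w} = Bw V E a w"
proof -
  have sym: "\<And>u v. E u v \<Longrightarrow> E v u" using g unfolding simple_graph_def by blast
  have "bij_betw rev {p \<in> walks V E a. last p = w} {q \<in> walks V E a. hd q = w}"
  proof (rule bij_betw_byWitness[where f' = rev])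
    show "rev ` {p \<in> walks V E a. last p = w} \<subseteq> {q \<in> walks V E a. hd q = w}"
    proof safe
      fix p assume p: "p \<in> walks V E a" "w = last p"
      have lp: "length p = Suc a" using p unfolding walks_def by auto
      show "hd (rev p) = last p" by (simp add: hd_rev)
      show "rev p \<in> walks V E a" unfolding walks_def
      proof (safe)
        show "length (rev p) = Suc a" using lp by simp
        show "\<And>x. x \<in> set (rev p) \<Longrightarrow> x \<in> V" using p unfolding walks_def by auto
        fix i assume i: "i < a"
        have "E (p ! (a - Suc i)) (p ! Suc (a - Suc i))" using p i unfolding walks_def by auto
        moreover have "Suc (a - Suc i) = a - i" using i by simp
        ultimately show "E (rev p ! i) (rev p ! Suc i)" using lp i
          by (simp add: rev_nth sym)
      qed
    qed
    show "rev ` {q \<in> walks V E a. hd q = w} \<subseteq> {p \<in> walks V E a. last p = w}"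
    proof safe
      fix p assume p: "p \<in> walks V E a" "w = hd p"
      have lp: "length p = Suc a" using p unfolding walks_def by auto
      show "last (rev p) = hd p" using lp by (simp add: last_rev)
      show "rev p \<in> walks V E a" unfolding walks_def
      proof (safe)
        show "length (rev p) = Suc a" using lp by simp
        show "\<And>x. x \<in> set (rev p) \<Longrightarrow> x \<in> V" using p unfolding walks_def by auto
        fix i assume i: "i < a"
        have "E (p ! (a - Suc i)) (p ! Suc (a - Suc i))" using p i unfolding walks_def by auto
        moreover have "Suc (a - Suc i) = a - i" using i by simp
        ultimately show "E (rev p ! i) (rev p ! Suc i)" using lp i
          by (simp add: rev_nth sym)
      qed
    qed
  qed auto
  then show ?thesis unfolding Bw_def by (rule bij_betw_same_card)
qed


lemma split_walks:
  assumes g: "simple_graph V E"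
  shows "num_walks V E (a + b) = (\<Sum>w\<in>V. Bw V E a w * Bw V E b w)"
proof -
  have fin: "finite V" using g unfolding simple_graph_def by blast
  define A where "A w = {p \<in> walks V E a. last p = w}" for w
  define B where "B w = {q \<in> walks V E b. hd q = w}" for w
  define T where "T = (\<Union>w\<in>V. A w \<times> B w)"
  define f where "f xs = (take (Suc a) xs, drop a xs)" for xs :: "'a list"
  define h where "h pq = fst pq @ tl (snd pq)" for pq :: "'a list \<times> 'a list"
  have "bij_betw f (walks V E (a + b)) T"
  proof (rule bij_betw_byWitness[where f' = h])
    show "\<forall>x\<in>walks V E (a + b). h (f x) = x"
    proof
      fix x assume "x \<in> walks V E (a + b)"
      show "h (f x) = x" unfolding h_def f_def by (simp add: tl_drop) (metis append_take_drop_id drop_Suc)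
    qed
    show "\<forall>y\<in>T. f (h y) = y"
    proof
      fix y assume "y \<in> T"
      then obtain p q w where y: "y = (p, q)" "p \<in> walks V E a" "last p = w" "q \<in> walks V E b" "hd q = w"
        unfolding T_def A_def B_def by auto
      have lp: "length p = Suc a" and lq: "length q = Suc b" using y unfolding walks_def by auto
      have pb: "p = butlast p @ [last p]" using lp by (metis append_butlast_last_id list.size(3) nat.distinct(1))
      have lb: "length (butlast p) = a" using lp by simp
      have dp: "drop a p = [last p]" using pb lb by (metis append_eq_conv_conj)
      have "drop a (p @ tl q) = drop a p @ tl q" using lp by simp
      also have "\<dots> = q" using dp y lq by (cases q) auto
      finally have "drop a (p @ tl q) = q" .
      then show "f (h y) = y" unfolding f_def h_def using y lp by simp
    qed
    show "f ` walks V E (a + b) \<subseteq> T"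
    proof
      fix z assume "z \<in> f ` walks V E (a + b)"
      then obtain x where x: "x \<in> walks V E (a + b)" "z = f x" by auto
      have lx: "length x = Suc (a + b)" and sx: "set x \<subseteq> V"
        and ex: "\<And>i. i < a + b \<Longrightarrow> E (x ! i) (x ! Suc i)" using x unfolding walks_def by auto
      have w: "x ! a \<in> V" using sx lx by (simp add: subset_iff)
      have lt: "last (take (Suc a) x) = x ! a" 
      proof -
        have ne: "take (Suc a) x \<noteq> []" using lx by (cases x) auto
        have "length (take (Suc a) x) = Suc a" using lx by simp
        then show ?thesis using last_conv_nth[OF ne] by simp
      qed
      have "take (Suc a) x \<in> A (x ! a)" unfolding A_def walks_def
        using lx sx ex lt set_take_subset[of "Suc a" x] by auto
      moreover have "drop a x \<in> B (x ! a)" unfolding B_def walks_def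
        using lx sx ex set_drop_subset[of a x] by (auto simp: hd_drop_conv_nth)
      ultimately show "z \<in> T" unfolding T_def using x w f_def by auto
    qed
    show "h ` T \<subseteq> walks V E (a + b)"
    proof
      fix z assume "z \<in> h ` T"
      then obtain p q w where y: "z = h (p, q)" "p \<in> walks V E a" "last p = w" "q \<in> walks V E b" "hd q = w"
        unfolding T_def A_def B_def by auto
      have lp: "length p = Suc a" and lq: "length q = Suc b" and sp: "set p \<subseteq> V" and sq: "set q \<subseteq> V"
        and ep: "\<And>i. i < a \<Longrightarrow> E (p ! i) (p ! Suc i)" and eq: "\<And>i. i < b \<Longrightarrow> E (q ! i) (q ! Suc i)"
        using y unfolding walks_def by auto
      have pn: "p \<noteq> []" "q \<noteq> []" using lp lq by auto
      have z: "z = p @ tl q" using y h_def by simp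
      show "z \<in> walks V E (a + b)" unfolding walks_def
      proof safe
        show "length z = Suc (a + b)" using z lp lq by simp
        show "\<And>x. x \<in> set z \<Longrightarrow> x \<in> V" using z sp sq pn(2) by (cases q) auto
        fix i assume i: "i < a + b"
        show "E (z ! i) (z ! Suc i)"
        proof (cases "i < a")
          case True
          then show ?thesis using z ep nth_app_tl_lo[OF lp, of i q] nth_app_tl_lo[OF lp, of "Suc i" q] by simp
        next
          case False
          have "E (q ! (i - a)) (q ! Suc (i - a))" using eq i False by simp
          moreover have "Suc (i - a) = Suc i - a" using False by simp
          ultimately show ?thesis using z False nth_app_tl_hi[OF lp pn(1) _ pn(2), of i] nth_app_tl_hi[OF lp pn(1) _ pn(2), of "Suc i"] y
            by simp
        qed
      qed
    qed
  qed
  then have "num_walks V E (a + b) = card T" unfolding num_walks_def by (rule bij_betw_same_card)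
  also have "\<dots> = (\<Sum>w\<in>V. card (A w \<times> B w))" unfolding T_def
  proof (rule card_UN_disjoint[OF fin])
    show "\<forall>w\<in>V. finite (A w \<times> B w)" using finite_walks[OF fin] unfolding A_def B_def by auto
    show "\<forall>i\<in>V. \<forall>j\<in>V. i \<noteq> j \<longrightarrow> A i \<times> B i \<inter> A j \<times> B j = {}" unfolding A_def by auto
  qed
  also have "\<dots> = (\<Sum>w\<in>V. Bw V E a w * Bw V E b w)"
    using rev_card[OF g] unfolding A_def B_def Bw_def by (simp add: card_cartesian_product)
  finally show ?thesis .
qed


lemma pair_ineq:
  assumes g: "simple_graph V E"
  shows "(num_walks V E (a + b))^2 \<le> num_walks V E (2 * a) * num_walks V E (2 * b)"
proof -
  have fin: "finite V" using g unfolding simple_graph_def by blast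
  have "\<And>c. num_walks V E (2 * c) = (\<Sum>w\<in>V. (Bw V E c w)^2)"
    using split_walks[OF g] by (simp add: mult_2 power2_eq_square)
  then show ?thesis using split_walks[OF g, of a b] cs_nat[OF fin] by simp
qed

theorem theorem3:
  fixes V :: "'a set" and E :: "'a \<Rightarrow> 'a \<Rightarrow> bool"
    and k :: nat and \<alpha> :: "nat \<Rightarrow> nat" and \<sigma> :: "nat \<Rightarrow> nat"
  assumes "k \<ge> 1"
    and "\<sigma> permutes {1..k}"
    and "simple_graph V E"
  shows "(\<Prod>i=1..k. num_walks V E (\<alpha> i + \<alpha> (\<sigma> i))) \<le> (\<Prod>i=1..k. num_walks V E (2 * \<alpha> i))"
proof -
  let ?w = "num_walks V E"
  have "(\<Prod>i=1..k. ?w (\<alpha> i + \<alpha> (\<sigma> i)))^2 = (\<Prod>i=1..k. (?w (\<alpha> i + \<alpha> (\<sigma> i)))^2)"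
    by (simp add: prod_power_distrib)
  also have "\<dots> \<le> (\<Prod>i=1..k. ?w (2 * \<alpha> i) * ?w (2 * \<alpha> (\<sigma> i)))"
    by (intro prod_mono conjI pair_ineq[OF assms(3)]) simp
  also have "\<dots> = (\<Prod>i=1..k. ?w (2 * \<alpha> i)) * (\<Prod>i=1..k. ?w (2 * \<alpha> (\<sigma> i)))"
    by (simp add: prod.distrib)
  also have "(\<Prod>i=1..k. ?w (2 * \<alpha> (\<sigma> i))) = (\<Prod>i=1..k. ?w (2 * \<alpha> i))"
    using prod.permute[OF assms(2), of "\<lambda>i. ?w (2 * \<alpha> i)"] by (simp add: comp_def)
  finally have "(\<Prod>i=1..k. ?w (\<alpha> i + \<alpha> (\<sigma> i)))^2 \<le> (\<Prod>i=1..k. ?w (2 * \<alpha> i))^2"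
    by (simp add: power2_eq_square)
  then show ?thesis by (rule power2_le_imp_le) simp
qed

end
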